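(* Let $G=(V,E)$ be an undirected graph with $n$ vertices and positive integer vertex weights with maximum weight $W_{max}$. The expected time until DEMO constructs a $2$-approximate vertex cover (a vertex cover of weight at most twice the minimum weight of a vertex cover) is $O\big(n^3(\log n+\log W_{max})^2\big)$.
   Context: Weighted vertex cover: $G=(V,E)$, $V=\{v_1,\dots,v_n\}$, $w:V\to\mathbb{N}^+$; $OPT$ is the minimum weight of a vertex cover. Search points $x\in\{0,1\}^n$ ($v_i$ selected iff $x_i=1$). $Cost(x)=\sum_i w(v_i)x_i$. $G(x)=(V(x),E(x))$ with $V(x)=V\setminus\{v_i:x_i=1\}$, $E(x)$ = edges with no selected endpoint. $LP(x)$ = optimal value of: minimize $\sum_{v_i\in V(x)}w(v_i)y_i$ s.t. $y_i+y_j\ge1$ for $\{v_i,v_j\}\in E(x)$, $0\le y_i\le1$. $f(x)=(Cost(x),LP(x))$, $f(x)\le f(y)$ componentwise. DEMO: let $\delta=\frac{1}{2n}$ and define the box function $b(x)=(b_1(x),b_2(x))$ with $b_1(x)=\lceil\log_{1+\delta}(1+Cost(x))\rceil$, $b_2(x)=\lceil\log_{1+\delta}(1+LP(x))\rceil$. Start with $x\in\{0,1\}^n$ uniformly at random, $P=\{x\}$. Each iteration: choose $x\in P$ uniformly at random; create $x'$ by flipping each bit independently with probability $1/n$; if there is $y\in P$ with ($f(y)\le f(x')$ and $f(y)\ne f(x')$) or ($b(y)=b(x')$ and $Cost(y)+2LP(y)\le Cost(x')+2LP(x')$), discard $x'$; otherwise add $x'$ to $P$ and delete all other $z\in P$ with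 $f(x')\le f(z)$ or $b(z)=b(x')$. Time = number of iterations. *)

theory Defs
  imports "HOL-Probability.Probability"
begin

(* Vertices are 0..<n; a search point x is the set of selected vertices (x \<subseteq> {0..<n}).
   Edges are 2-element subsets of {0..<n}. Weights w :: nat \<Rightarrow> nat (positive on {0..<n}). *)

definition is_graph :: "nat \<Rightarrow> nat set set \<Rightarrow> bool" where
  "is_graph n E \<longleftrightarrow> (\<forall>e\<in>E. card e = 2 \<and> e \<subseteq> {0..<n})"

definition cost :: "(nat \<Rightarrow> nat) \<Rightarrow> nat set \<Rightarrow> nat" where
  "cost w x = (\<Sum>i\<in>x. w i)"

definition is_vertex_cover :: "nat \<Rightarrow> nat set set \<Rightarrow> nat set \<Rightarrow> bool" where
  "is_vertex_cover n E x \<longleftrightarrow> x \<subseteq> {0..<n} \<and> (\<forall>e\<in>E. e \<inter> x \<noteq> {})"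

definition OPT :: "nat \<Rightarrow> nat set set \<Rightarrow> (nat \<Rightarrow> nat) \<Rightarrow> nat" where
  "OPT n E w = Min (cost w ` {x. is_vertex_cover n E x})"

definition uncovered :: "nat set set \<Rightarrow> nat set \<Rightarrow> nat set set" where
  "uncovered E x = {e\<in>E. e \<inter> x = {}}"

(* optimal value of the LP relaxation on G(x) *)
definition LP :: "nat \<Rightarrow> nat set set \<Rightarrow> (nat \<Rightarrow> nat) \<Rightarrow> nat set \<Rightarrow> real" where
  "LP n E w x = Inf {(\<Sum>i\<in>{0..<n} - x. real (w i) * y i) | y.
       (\<forall>i. 0 \<le> y i \<and> y i \<le> 1) \<and> (\<forall>e\<in>uncovered E x. (\<Sum>i\<in>e. y i) \<ge> 1)}"

definition f_le :: "nat \<Rightarrow> nat set set \<Rightarrow> (nat \<Rightarrow> nat) \<Rightarrow> nat set \<Rightarrow> nat set \<Rightarrow> bool" where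
  "f_le n E w y x \<longleftrightarrow> cost w y \<le> cost w x \<and> LP n E w y \<le> LP n E w x"

definition f_eq :: "nat \<Rightarrow> nat set set \<Rightarrow> (nat \<Rightarrow> nat) \<Rightarrow> nat set \<Rightarrow> nat set \<Rightarrow> bool" where
  "f_eq n E w y x \<longleftrightarrow> cost w y = cost w x \<and> LP n E w y = LP n E w x"

definition box :: "nat \<Rightarrow> nat set set \<Rightarrow> (nat \<Rightarrow> nat) \<Rightarrow> nat set \<Rightarrow> int \<times> int" where
  "box n E w x = (let \<delta> = 1 / (2 * real n) in
     (\<lceil>log (1 + \<delta>) (1 + real (cost w x))\<rceil>, \<lceil>log (1 + \<delta>) (1 + LP n E w x)\<rceil>))"

definition discard :: "nat \<Rightarrow> nat set set \<Rightarrow> (nat \<Rightarrow> nat) \<Rightarrow> nat set set \<Rightarrow> nat set \<Rightarrow> bool" where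
  "discard n E w P x' \<longleftrightarrow> (\<exists>y\<in>P. (f_le n E w y x' \<and> \<not> f_eq n E w y x') \<or>
      (box n E w y = box n E w x' \<and>
       real (cost w y) + 2 * LP n E w y \<le> real (cost w x') + 2 * LP n E w x'))"

definition update :: "nat \<Rightarrow> nat set set \<Rightarrow> (nat \<Rightarrow> nat) \<Rightarrow> nat set set \<Rightarrow> nat set \<Rightarrow> nat set set" where
  "update n E w P x' = (if discard n E w P x' then P
     else insert x' {z\<in>P. z \<noteq> x' \<and> \<not> (f_le n E w x' z \<or> box n E w z = box n E w x')})"

definition mutate :: "nat \<Rightarrow> nat set \<Rightarrow> nat set pmf" where
  "mutate n x = map_pmf (\<lambda>F. {i. i < n \<and> ((i \<in> x) \<noteq> F i)})
                  (Pi_pmf {0..<n} False (\<lambda>_. bernoulli_pmf (1 / real n)))"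

definition demo_step :: "nat \<Rightarrow> nat set set \<Rightarrow> (nat \<Rightarrow> nat) \<Rightarrow> nat set set \<Rightarrow> nat set set pmf" where
  "demo_step n E w P = do { x \<leftarrow> pmf_of_set P; x' \<leftarrow> mutate n x; return_pmf (update n E w P x') }"

definition demo_init :: "nat \<Rightarrow> nat set set pmf" where
  "demo_init n = map_pmf (\<lambda>x. {x}) (pmf_of_set (Pow {0..<n}))"

definition goal :: "nat \<Rightarrow> nat set set \<Rightarrow> (nat \<Rightarrow> nat) \<Rightarrow> nat set set \<Rightarrow> bool" where
  "goal n E w P \<longleftrightarrow> (\<exists>x\<in>P. is_vertex_cover n E x \<and> cost w x \<le> 2 * OPT n E w)"

definition stopped_step :: "nat \<Rightarrow> nat set set \<Rightarrow> (nat \<Rightarrow> nat) \<Rightarrow> nat set set \<Rightarrow> nat set set pmf" where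
  "stopped_step n E w P = (if goal n E w P then return_pmf P else demo_step n E w P)"

primrec demo_pop :: "nat \<Rightarrow> nat set set \<Rightarrow> (nat \<Rightarrow> nat) \<Rightarrow> nat \<Rightarrow> nat set set pmf" where
  "demo_pop n E w 0 = demo_init n"
| "demo_pop n E w (Suc t) = demo_pop n E w t \<bind> stopped_step n E w"

(* expected number of iterations T until the population contains a 2-approximation:
   E[T] = \<Sum>_t Pr[T > t] *)
definition expected_time :: "nat \<Rightarrow> nat set set \<Rightarrow> (nat \<Rightarrow> nat) \<Rightarrow> ennreal" where
  "expected_time n E w =
     (\<Sum>t. ennreal (measure_pmf.prob (demo_pop n E w t) {P. \<not> goal n E w P}))"

end

theory Submission
  imports Defs
begin

locale DS =
  fixes n :: nat and E :: "nat set set" and w :: "nat \<Rightarrow> nat"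
  assumes graph: "is_graph n E" and wpos: "\<And>i. i < n \<Longrightarrow> w i > 0"
begin

definition feas :: "nat set \<Rightarrow> (nat \<Rightarrow> real) \<Rightarrow> bool" where
  "feas x y \<longleftrightarrow> (\<forall>i. 0 \<le> y i \<and> y i \<le> 1) \<and> (\<forall>e\<in>uncovered E x. (\<Sum>i\<in>e. y i) \<ge> 1)"

definition obj :: "nat set \<Rightarrow> (nat \<Rightarrow> real) \<Rightarrow> real" where
  "obj x y = (\<Sum>i\<in>{0..<n} - x. real (w i) * y i)"

lemma LP_eq: "LP n E w x = Inf (obj x ` {y. feas x y})"
  unfolding LP_def obj_def feas_def by (rule arg_cong[where f=Inf]) blast

lemma edge: assumes "e \<in> E" obtains a b where "e = {a,b}" "a \<noteq> b" "a < n" "b < n"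
proof -
  from graph assms have c: "card e = 2" and s: "e \<subseteq> {0..<n}" by (auto simp: is_graph_def)
  from c obtain a b where "e = {a,b}" "a \<noteq> b" by (meson card_2_iff)
  with s show ?thesis using that by auto
qed

lemma feas_one: "feas x (\<lambda>_. 1)"
proof -
  have "(\<Sum>i\<in>e. (1::real)) \<ge> 1" if "e \<in> E" for e
    using edge[OF that] by (metis card_2_iff one_le_numeral sum_constant mult_1_right of_nat_numeral)
  then show ?thesis unfolding feas_def uncovered_def by auto
qed

lemma obj_nonneg: "feas x y \<Longrightarrow> obj x y \<ge> 0"
  unfolding obj_def feas_def by (auto intro!: sum_nonneg)

lemma bdd: "bdd_below (obj x ` {y. feas x y})"
  by (rule bdd_belowI[where m=0]) (auto intro: obj_nonneg)

lemma LP_le: "feas x y \<Longrightarrow> LP n E w x \<le> obj x y"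
  unfolding LP_eq by (rule cInf_lower) (auto intro: bdd)

lemma LP_nonneg: "LP n E w x \<ge> 0"
  unfolding LP_eq using feas_one by (intro cInf_greatest) (auto intro: obj_nonneg)

lemma LP_ge: assumes "\<And>y. feas x y \<Longrightarrow> c \<le> obj x y" shows "c \<le> LP n E w x"
  unfolding LP_eq using feas_one assms by (intro cInf_greatest) auto

lemma LP_empty_unc: assumes "uncovered E x = {}" shows "LP n E w x = 0"
proof -
  have "feas x (\<lambda>_. 0)" using assms unfolding feas_def by auto
  then have "LP n E w x \<le> 0" using LP_le[of x "\<lambda>_. 0"] by (simp add: obj_def)
  with LP_nonneg show ?thesis by (meson order.antisym)
qed

lemma LP_ge1: assumes "uncovered E x \<noteq> {}" shows "LP n E w x \<ge> 1"
proof (rule LP_ge)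
  fix y assume f: "feas x y"
  from assms obtain e where e: "e \<in> E" "e \<inter> x = {}" unfolding uncovered_def by auto
  obtain a b where ab: "e = {a,b}" "a \<noteq> b" "a < n" "b < n" using edge[OF e(1)] by blast
  have "1 \<le> y a + y b" using f e ab unfolding feas_def uncovered_def by auto
  also have "\<dots> \<le> real (w a) * y a + real (w b) * y b"
  proof -
    have wa: "real (w a) \<ge> 1" "real (w b) \<ge> 1" using wpos[OF ab(3)] wpos[OF ab(4)] by auto
    have "0 \<le> y a" "0 \<le> y b" using f unfolding feas_def by auto
    then have "y a \<le> real (w a) * y a" "y b \<le> real (w b) * y b" using wa
      by (simp_all add: mult_le_cancel_right1)
    then show ?thesis by simp
  qed
  also have "\<dots> = (\<Sum>i\<in>{a,b}. real (w i) * y i)" using ab by simp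
  also have "\<dots> \<le> obj x y" unfolding obj_def
    using ab e f by (intro sum_mono2) (auto simp: feas_def)
  finally show "1 \<le> obj x y" .
qed

definition hv :: "real \<Rightarrow> bool" where "hv t \<longleftrightarrow> t = 0 \<or> t = 1/2 \<or> t = 1"

lemma perturb_feas:
  assumes f: "feas x y" and z0: "\<And>i. i \<notin> {0..<n} - x \<Longrightarrow> y i = 0"
    and F: "F = {i\<in>{0..<n} - x. \<not> hv (y i)}"
    and nF: "\<And>i. i \<notin> F \<Longrightarrow> z i = y i"
    and sm: "\<And>i. i \<in> F \<Longrightarrow> y i < 1/2 \<Longrightarrow> 0 \<le> z i \<and> z i \<le> 1/2 \<and> z i - y i = u"
    and lg: "\<And>i. i \<in> F \<Longrightarrow> y i > 1/2 \<Longrightarrow> 1/2 \<le> z i \<and> z i \<le> 1 \<and> y i - z i = u"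
  shows "feas x z"
proof -
  have yb: "0 \<le> y i \<and> y i \<le> 1" for i using f unfolding feas_def by auto
  have cl: "(i \<notin> F \<and> z i = y i \<and> hv (y i)) \<or> (i \<in> F \<and> y i < 1/2 \<and> 0 \<le> z i \<and> z i \<le> 1/2 \<and> z i - y i = u)
     \<or> (i \<in> F \<and> y i > 1/2 \<and> 1/2 \<le> z i \<and> z i \<le> 1 \<and> y i - z i = u)" if "i \<in> {0..<n} - x" for i
  proof (cases "i \<in> F")
    case True
    then have "y i \<noteq> 1/2" using F by (auto simp: hv_def)
    then show ?thesis using sm[OF True] lg[OF True] True by (cases "y i < 1/2") auto
  next
    case False then show ?thesis using F that nF by auto
  qed
  have bnd: "0 \<le> z i \<and> z i \<le> 1" for i
  proof (cases "i \<in> {0..<n} - x")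
    case True then show ?thesis using cl[OF True] yb[of i] by auto
  next
    case False then have "i \<notin> F" using F by auto
    then show ?thesis using nF yb by auto
  qed
  have "1 \<le> (\<Sum>i\<in>e. z i)" if e: "e \<in> uncovered E x" for e
  proof -
    from e have eE: "e \<in> E" and ex: "e \<inter> x = {}" unfolding uncovered_def by auto
    obtain a b where ab: "e = {a,b}" "a \<noteq> b" "a < n" "b < n" using edge[OF eE] by blast
    have aA: "a \<in> {0..<n} - x" and bA: "b \<in> {0..<n} - x" using ab ex by auto
    have s1: "1 \<le> y a + y b" using f e ab unfolding feas_def by auto
    have ca: "(z a = y a \<and> (y a = 0 \<or> y a = 1/2 \<or> y a = 1)) \<or> (0 < y a \<and> y a < 1/2 \<and> 0 \<le> z a \<and> z a \<le> 1/2 \<and> z a - y a = u)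
     \<or> (y a < 1 \<and> y a > 1/2 \<and> 1/2 \<le> z a \<and> z a \<le> 1 \<and> y a - z a = u)" using cl[OF aA] F yb[of a] unfolding hv_def by force
    have cb: "(z b = y b \<and> (y b = 0 \<or> y b = 1/2 \<or> y b = 1)) \<or> (0 < y b \<and> y b < 1/2 \<and> 0 \<le> z b \<and> z b \<le> 1/2 \<and> z b - y b = u)
     \<or> (y b < 1 \<and> y b > 1/2 \<and> 1/2 \<le> z b \<and> z b \<le> 1 \<and> y b - z b = u)" using cl[OF bA] F yb[of b] unfolding hv_def by force
    have "1 \<le> z a + z b" using ca cb s1 yb[of a] yb[of b] by (elim disjE conjE) linarith+
    then show ?thesis using ab by simp
  qed
  then show ?thesis using bnd unfolding feas_def by auto
qed

lemma perturb_obj: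
  assumes F: "F \<subseteq> {0..<n} - x"
    and nF: "\<And>i. i \<notin> F \<Longrightarrow> z i = y i"
    and sm: "\<And>i. i \<in> F \<Longrightarrow> y i < 1/2 \<Longrightarrow> z i - y i = u"
    and lg: "\<And>i. i \<in> F \<Longrightarrow> \<not> y i < 1/2 \<Longrightarrow> y i - z i = u"
  shows "obj x z = obj x y + u * ((\<Sum>i\<in>{i\<in>F. y i < 1/2}. real (w i)) - (\<Sum>i\<in>{i\<in>F. \<not> y i < 1/2}. real (w i)))"
proof -
  let ?A = "{0..<n} - x"
  have "obj x z - obj x y = (\<Sum>i\<in>?A. real (w i) * (z i - y i))"
    unfolding obj_def by (simp add: sum_subtractf right_diff_distrib)
  also have "\<dots> = (\<Sum>i\<in>?A. (if i \<in> F \<and> y i < 1/2 then u * real (w i) else 0)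
                     - (if i \<in> F \<and> \<not> y i < 1/2 then u * real (w i) else 0))"
  proof (rule sum.cong[OF refl])
    fix i assume "i \<in> ?A"
    show "real (w i) * (z i - y i) = (if i \<in> F \<and> y i < 1/2 then u * real (w i) else 0)
                     - (if i \<in> F \<and> \<not> y i < 1/2 then u * real (w i) else 0)"
    proof (cases "i \<in> F")
      case True then show ?thesis using sm[OF True] lg[OF True]
        by (cases "y i < 1/2") (auto simp: algebra_simps)
    next
      case False then show ?thesis using nF[OF False] by simp
    qed
  qed
  also have "\<dots> = (\<Sum>i\<in>{i\<in>?A. i \<in> F \<and> y i < 1/2}. u * real (w i)) - (\<Sum>i\<in>{i\<in>?A. i \<in> F \<and> \<not> y i < 1/2}. u * real (w i))"
    by (subst (1 2) sum.inter_filter) (auto simp: sum_subtractf)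
  also have "{i\<in>?A. i \<in> F \<and> y i < 1/2} = {i\<in>F. y i < 1/2}" using F by auto
  also have "{i\<in>?A. i \<in> F \<and> \<not> y i < 1/2} = {i\<in>F. \<not> y i < 1/2}" using F by auto
  finally show ?thesis by (simp add: sum_distrib_left right_diff_distrib)
qed

lemma half_int_aux:
  "\<forall>y. feas x y \<and> (\<forall>i. i \<notin> {0..<n} - x \<longrightarrow> y i = 0) \<and> card {i\<in>{0..<n} - x. \<not> hv (y i)} = k \<longrightarrow>
     (\<exists>y'. feas x y' \<and> obj x y' \<le> obj x y \<and> (\<forall>i. hv (y' i)) \<and> (\<forall>i. i \<notin> {0..<n} - x \<longrightarrow> y' i = 0))"
proof (induction k rule: less_induct)
  case (less k)
  let ?A = "{0..<n} - x"
  show ?case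
  proof (intro allI impI, elim conjE)
    fix y assume f: "feas x y" and z0: "\<forall>i. i \<notin> ?A \<longrightarrow> y i = 0" and ck: "card {i\<in>?A. \<not> hv (y i)} = k"
    define F where "F = {i\<in>?A. \<not> hv (y i)}"
    have finF: "finite F" unfolding F_def by auto
    have yb: "0 \<le> y i \<and> y i \<le> 1" for i using f unfolding feas_def by auto
    show "\<exists>y'. feas x y' \<and> obj x y' \<le> obj x y \<and> (\<forall>i. hv (y' i)) \<and> (\<forall>i. i \<notin> ?A \<longrightarrow> y' i = 0)"
    proof (cases "F = {}")
      case True
      have "hv (y i)" for i
      proof (cases "i \<in> ?A")
        case True then show ?thesis using \<open>F = {}\<close> unfolding F_def by auto
      next
        case False then show ?thesis using z0 by (auto simp: hv_def)
      qed
      then show ?thesis using f z0 by blast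
    next
      case False
      have Fp: "i \<in> F \<Longrightarrow> 0 < y i \<and> y i < 1 \<and> y i \<noteq> 1/2" for i
        using yb[of i] unfolding F_def hv_def by force
      define Ws where "Ws = (\<Sum>i\<in>{i\<in>F. y i < 1/2}. real (w i))"
      define Wl where "Wl = (\<Sum>i\<in>{i\<in>F. \<not> y i < 1/2}. real (w i))"
      have key: "\<exists>z. feas x z \<and> obj x z \<le> obj x y \<and> (\<forall>i. i \<notin> ?A \<longrightarrow> z i = 0) \<and> card {i\<in>?A. \<not> hv (z i)} < k"
      proof (cases "Ws \<le> Wl")
        case True
        define t where "t = Min ((\<lambda>i. \<bar>y i - 1/2\<bar>) ` F)"
        have tle: "i \<in> F \<Longrightarrow> t \<le> \<bar>y i - 1/2\<bar>" for i unfolding t_def using finF by auto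
        obtain i0 where i0: "i0 \<in> F" "t = \<bar>y i0 - 1/2\<bar>"
        proof -
          have "t \<in> (\<lambda>i. \<bar>y i - 1/2\<bar>) ` F" unfolding t_def by (rule Min_in) (use finF \<open>F \<noteq> {}\<close> in auto)
          then show ?thesis using that by auto
        qed
        have tpos: "t > 0" using i0 Fp[OF i0(1)] by auto
        define z where "z i = (if i \<in> F then (if y i < 1/2 then y i + t else y i - t) else y i)" for i
        have nF: "i \<notin> F \<Longrightarrow> z i = y i" for i unfolding z_def by auto
        have sm: "i \<in> F \<Longrightarrow> y i < 1/2 \<Longrightarrow> 0 \<le> z i \<and> z i \<le> 1/2 \<and> z i - y i = t" for i
          using tle[of i] yb[of i] tpos unfolding z_def by auto
        have lg: "i \<in> F \<Longrightarrow> y i > 1/2 \<Longrightarrow> 1/2 \<le> z i \<and> z i \<le> 1 \<and> y i - z i = t" for i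
          using tle[of i] yb[of i] tpos unfolding z_def by auto
        have fz: "feas x z" by (rule perturb_feas[OF f _ F_def nF sm lg]) (use z0 in auto)
        have lg': "i \<in> F \<Longrightarrow> \<not> y i < 1/2 \<Longrightarrow> y i - z i = t" for i
          using lg[of i] Fp[of i] by force
        have sm': "i \<in> F \<Longrightarrow> y i < 1/2 \<Longrightarrow> z i - y i = t" for i using sm by blast
        have "obj x z = obj x y + t * (Ws - Wl)" unfolding Ws_def Wl_def
          by (rule perturb_obj[OF _ nF sm' lg']) (auto simp: F_def)
        moreover have "t * (Ws - Wl) \<le> 0" using True tpos by (simp add: mult_nonneg_nonpos)
        ultimately have oz: "obj x z \<le> obj x y" by simp
        have zz: "\<forall>i. i \<notin> ?A \<longrightarrow> z i = 0" using z0 nF unfolding F_def by auto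
        have "{i\<in>?A. \<not> hv (z i)} \<subseteq> F - {i0}"
        proof
          fix i assume i: "i \<in> {i\<in>?A. \<not> hv (z i)}"
          then have "i \<in> F" using nF unfolding F_def by force
          moreover have "i \<noteq> i0"
          proof
            assume "i = i0"
            then have "z i = 1/2" using i0 Fp[OF i0(1)] unfolding z_def by (auto split: if_splits)
            then show False using i by (auto simp: hv_def)
          qed
          ultimately show "i \<in> F - {i0}" by auto
        qed
        then have "card {i\<in>?A. \<not> hv (z i)} < k"
          using ck i0(1) finF unfolding F_def[symmetric]
          by (metis (no_types, lifting) card_Diff1_less card_mono finite_Diff le_less_trans)
        then show ?thesis using fz oz zz by blast
      next
        case False
        define t where "t = Min ((\<lambda>i. if y i < 1/2 then y i else 1 - y i) ` F)"
        have tle: "i \<in> F \<Longrightarrow> t \<le> (if y i < 1/2 then y i else 1 - y i)" for i unfolding t_def using finF by auto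
        obtain i0 where i0: "i0 \<in> F" "t = (if y i0 < 1/2 then y i0 else 1 - y i0)"
        proof -
          have "t \<in> (\<lambda>i. if y i < 1/2 then y i else 1 - y i) ` F" unfolding t_def by (rule Min_in) (use finF \<open>F \<noteq> {}\<close> in auto)
          then show ?thesis using that by auto
        qed
        have tpos: "t > 0" using i0 Fp[OF i0(1)] by auto
        define z where "z i = (if i \<in> F then (if y i < 1/2 then y i - t else y i + t) else y i)" for i
        have nF: "i \<notin> F \<Longrightarrow> z i = y i" for i unfolding z_def by auto
        have sm: "i \<in> F \<Longrightarrow> y i < 1/2 \<Longrightarrow> 0 \<le> z i \<and> z i \<le> 1/2 \<and> z i - y i = -t" for i
          using tle[of i] yb[of i] tpos unfolding z_def by auto
        have lg: "i \<in> F \<Longrightarrow> y i > 1/2 \<Longrightarrow> 1/2 \<le> z i \<and> z i \<le> 1 \<and> y i - z i = -t" for i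
          using tle[of i] yb[of i] tpos unfolding z_def by auto
        have fz: "feas x z" by (rule perturb_feas[OF f _ F_def nF sm lg]) (use z0 in auto)
        have lg': "i \<in> F \<Longrightarrow> \<not> y i < 1/2 \<Longrightarrow> y i - z i = -t" for i
          using lg[of i] Fp[of i] by force
        have sm': "i \<in> F \<Longrightarrow> y i < 1/2 \<Longrightarrow> z i - y i = -t" for i using sm by blast
        have "obj x z = obj x y + (-t) * (Ws - Wl)" unfolding Ws_def Wl_def
          by (rule perturb_obj[OF _ nF sm' lg']) (auto simp: F_def)
        moreover have "(-t) * (Ws - Wl) \<le> 0" using False tpos by (simp add: mult_nonneg_nonneg)
        ultimately have oz: "obj x z \<le> obj x y" by simp
        have zz: "\<forall>i. i \<notin> ?A \<longrightarrow> z i = 0" using z0 nF unfolding F_def by auto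
        have "{i\<in>?A. \<not> hv (z i)} \<subseteq> F - {i0}"
        proof
          fix i assume i: "i \<in> {i\<in>?A. \<not> hv (z i)}"
          then have "i \<in> F" using nF unfolding F_def by force
          moreover have "i \<noteq> i0"
          proof
            assume "i = i0"
            then have "z i = 0 \<or> z i = 1" using i0 Fp[OF i0(1)] unfolding z_def by (auto split: if_splits)
            then show False using i by (auto simp: hv_def)
          qed
          ultimately show "i \<in> F - {i0}" by auto
        qed
        then have "card {i\<in>?A. \<not> hv (z i)} < k"
          using ck i0(1) finF unfolding F_def[symmetric]
          by (metis (no_types, lifting) card_Diff1_less card_mono finite_Diff le_less_trans)
        then show ?thesis using fz oz zz by blast
      qed
      then obtain z where z: "feas x z" "obj x z \<le> obj x y" "\<forall>i. i \<notin> ?A \<longrightarrow> z i = 0" "card {i\<in>?A. \<not> hv (z i)} < k"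
        by blast
      from less.IH[OF z(4)] z obtain y' where "feas x y'" "obj x y' \<le> obj x z" "\<forall>i. hv (y' i)" "\<forall>i. i \<notin> ?A \<longrightarrow> y' i = 0"
        by blast
      then show ?thesis using z(2) by force
    qed
  qed
qed

lemma feas_norm: assumes "feas x y" shows "feas x (\<lambda>i. if i \<in> {0..<n} - x then y i else 0)"
proof -
  have "(\<Sum>i\<in>e. (if i \<in> {0..<n} - x then y i else 0)) = (\<Sum>i\<in>e. y i)" if "e \<in> uncovered E x" for e
  proof (rule sum.cong[OF refl])
    fix i assume "i \<in> e"
    have "e \<subseteq> {0..<n}" "e \<inter> x = {}" using that graph unfolding uncovered_def is_graph_def by auto
    with \<open>i \<in> e\<close> have "i \<in> {0..<n} - x" by blast
    then show "(if i \<in> {0..<n} - x then y i else 0) = y i" by simp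
  qed
  then show ?thesis using assms unfolding feas_def by auto
qed

lemma obj_norm: "obj x (\<lambda>i. if i \<in> {0..<n} - x then y i else 0) = obj x y"
  unfolding obj_def by (rule sum.cong) auto

lemma LP_opt: "\<exists>y. feas x y \<and> obj x y = LP n E w x \<and> (\<forall>i. hv (y i)) \<and> (\<forall>i. i \<notin> {0..<n} - x \<longrightarrow> y i = 0)"
proof -
  let ?A = "{0..<n} - x"
  define H where "H = {y. feas x y \<and> (\<forall>i. hv (y i)) \<and> (\<forall>i. i \<notin> ?A \<longrightarrow> y i = 0)}"
  have red: "\<exists>y'\<in>H. obj x y' \<le> obj x y" if "feas x y" for y
  proof -
    let ?y = "\<lambda>i. if i \<in> ?A then y i else 0"
    have "feas x ?y" by (rule feas_norm[OF that])
    have "\<exists>y'. feas x y' \<and> obj x y' \<le> obj x ?y \<and> (\<forall>i. hv (y' i)) \<and> (\<forall>i. i \<notin> ?A \<longrightarrow> y' i = 0)"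
      by (rule half_int_aux[rule_format]) (use \<open>feas x ?y\<close> in auto)
    then obtain y' where
      "feas x y'" "obj x y' \<le> obj x ?y" "\<forall>i. hv (y' i)" "\<forall>i. i \<notin> ?A \<longrightarrow> y' i = 0"
      by blast
    then show ?thesis unfolding H_def obj_norm by auto
  qed
  have "H \<subseteq> (\<lambda>g i. if i \<in> ?A then g i else 0) ` (?A \<rightarrow>\<^sub>E {0, 1/2, 1})"
  proof
    fix y assume y: "y \<in> H"
    have "y = (\<lambda>i. if i \<in> ?A then restrict y ?A i else 0)" using y unfolding H_def by auto
    moreover have "restrict y ?A \<in> ?A \<rightarrow>\<^sub>E {0, 1/2, 1}" using y unfolding H_def hv_def by auto
    ultimately show "y \<in> (\<lambda>g i. if i \<in> ?A then g i else 0) ` (?A \<rightarrow>\<^sub>E {0, 1/2, 1})" by blast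
  qed
  then have finH: "finite H" by (rule finite_subset) (intro finite_imageI finite_PiE; auto)
  obtain y1 where y1: "y1 \<in> H" using red[OF feas_one] by blast
  then have neH: "H \<noteq> {}" by auto
  define m where "m = Min (obj x ` H)"
  have "m \<in> obj x ` H" unfolding m_def using finH neH by (intro Min_in) auto
  then obtain ys where ys: "ys \<in> H" "obj x ys = m" by auto
  have mle: "m \<le> obj x y" if "y \<in> H" for y unfolding m_def using finH that by auto
  have "LP n E w x \<le> obj x ys" using ys H_def LP_le by auto
  moreover have "obj x ys \<le> LP n E w x"
  proof (rule LP_ge)
    fix y assume "feas x y"
    then obtain y' where "y' \<in> H" "obj x y' \<le> obj x y" using red by blast
    then show "obj x ys \<le> obj x y" using mle[of y'] ys by linarith
  qed
  ultimately show ?thesis using ys unfolding H_def by auto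
qed

lemma feas_insert: "feas x y \<Longrightarrow> feas (insert i x) y"
  unfolding feas_def uncovered_def by auto

lemma LP_step:
  assumes "LP n E w x \<ge> 1"
  shows "\<exists>i<n. i \<notin> x \<and> real (w i) \<le> 2 * (LP n E w x - LP n E w (insert i x))
            \<and> LP n E w x \<le> real n * (LP n E w x - LP n E w (insert i x))"
proof -
  let ?A = "{0..<n} - x"
  obtain y where y: "feas x y" "obj x y = LP n E w x" "\<forall>i. hv (y i)" using LP_opt by blast
  have yb: "0 \<le> y i" for i using y(1) unfolding feas_def by auto
  have neA: "?A \<noteq> {}"
  proof
    assume "?A = {}" then have "obj x y = 0" unfolding obj_def by (simp only: sum.empty)
    with y(2) assms show False by simp
  qed
  define M where "M = Max ((\<lambda>i. real (w i) * y i) ` ?A)"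
  have "M \<in> (\<lambda>i. real (w i) * y i) ` ?A" unfolding M_def using neA by (intro Max_in) auto
  then obtain i where i: "i \<in> ?A" "real (w i) * y i = M" by auto
  have Mge: "real (w j) * y j \<le> M" if "j \<in> ?A" for j unfolding M_def using that by auto
  have "LP n E w x = (\<Sum>j\<in>?A. real (w j) * y j)" using y(2) unfolding obj_def by simp
  also have "\<dots> \<le> (\<Sum>j\<in>?A. M)" by (rule sum_mono) (use Mge in auto)
  also have "\<dots> = real (card ?A) * M" by simp
  also have "\<dots> \<le> real n * M"
  proof (rule mult_right_mono)
    show "real (card ?A) \<le> real n" using card_mono[of "{0..<n}" ?A] by auto
    show "0 \<le> M" using i(2)[symmetric] yb[of i] by simp
  qed
  finally have LM: "LP n E w x \<le> real n * M" .
  have "M > 0"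
  proof (rule ccontr)
    assume "\<not> M > 0" then have "real n * M \<le> 0" by (simp add: mult_nonneg_nonpos)
    with LM assms show False by linarith
  qed
  then have "y i > 0" using i(2) yb[of i] by (cases "y i = 0") auto
  then have yh: "y i \<ge> 1/2" using y(3)[rule_format, of i] unfolding hv_def by auto
  have "LP n E w (insert i x) \<le> obj (insert i x) y" by (rule LP_le[OF feas_insert[OF y(1)]])
  also have "obj (insert i x) y = obj x y - real (w i) * y i"
  proof -
    have "{0..<n} - insert i x = ?A - {i}" by auto
    then show ?thesis unfolding obj_def using i(1) by (simp add: sum_diff1)
  qed
  finally have d: "LP n E w x - LP n E w (insert i x) \<ge> M" using y(2) i(2) by simp
  have "real (w i) * (1/2) \<le> real (w i) * y i" using yh by (intro mult_left_mono) auto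
  then have w2: "real (w i) \<le> 2 * M" using i(2) by simp
  have nM: "real n * M \<le> real n * (LP n E w x - LP n E w (insert i x))" using d by (simp add: mult_left_mono)
  have f1: "LP n E w x \<le> real n * (LP n E w x - LP n E w (insert i x))" using LM nM by (smt (verit))
  have f2: "real (w i) \<le> 2 * (LP n E w x - LP n E w (insert i x))" using w2 d by (smt (verit))
  have "i < n" "i \<notin> x" using i(1) by auto
  then show ?thesis using f1 f2 by blast
qed

end


lemma ceil_log_drop:
  fixes a a' m :: real
  assumes m: "m \<ge> 1" and a: "a \<ge> 1" and a': "0 \<le> a'" and d: "a \<le> m * (a - a')"
  shows "\<lceil>log (1 + 1/(2*m)) (1 + a')\<rceil> \<le> \<lceil>log (1 + 1/(2*m)) (1 + a)\<rceil> - 1"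
proof -
  let ?b = "1 + 1/(2*m)"
  have b1: "?b > 1" using m by simp
  have "a' \<le> a - a/m" using d m by (simp add: field_simps)
  have key: "(1 + a - a/m) * ?b \<le> 1 + a"
  proof -
    have "(1 + a - a/m) * ?b = 1 + a + ((1 - a)/(2*m) - a/(2*m*m))"
      using m by (simp add: field_simps)
    also have "(1 - a)/(2*m) \<le> 0" using a m by (simp add: divide_nonpos_pos)
    moreover have "a/(2*m*m) \<ge> 0" using a m by simp
    ultimately show ?thesis by linarith
  qed
  have "(1 + a') * ?b \<le> (1 + a - a/m) * ?b" using \<open>a' \<le> a - a/m\<close> b1 by (intro mult_right_mono) auto
  with key have "(1 + a') * ?b \<le> 1 + a" by linarith
  moreover have "0 < (1 + a') * ?b" using b1 a' by (intro mult_pos_pos) linarith+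
  ultimately have "log ?b ((1 + a') * ?b) \<le> log ?b (1 + a)" using b1 a by (subst log_le_cancel_iff) auto
  moreover have "log ?b ?b = 1" using b1 by (intro log_eq_one) linarith+
  moreover have "log ?b ((1 + a') * ?b) = log ?b (1 + a') + log ?b ?b" using b1 a' by (intro log_mult_pos) linarith+
  ultimately have "log ?b (1 + a') + 1 \<le> log ?b (1 + a)" by simp
  then have "log ?b (1 + a') \<le> log ?b (1 + a) - 1" by linarith
  then have "\<lceil>log ?b (1 + a')\<rceil> \<le> \<lceil>log ?b (1 + a) - 1\<rceil>" by (rule ceiling_mono)
  then show ?thesis by simp
qed

locale DS2 = DS +
  assumes n2: "n \<ge> 2"
begin

abbreviation "V \<equiv> {0..<n}"
abbreviation "bb \<equiv> 1 + 1 / (2 * real n)"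
definition "Wm = Max (w ` V)"
definition "B = \<lceil>log bb (1 + real n * real Wm)\<rceil>"
definition "b1 x = \<lceil>log bb (1 + real (cost w x))\<rceil>"
definition "b2 x = \<lceil>log bb (1 + LP n E w x)\<rceil>"
definition "val x = real (cost w x) + 2 * LP n E w x"

lemma box_eq: "box n E w x = (b1 x, b2 x)"
  unfolding box_def b1_def b2_def Let_def by simp

lemma bb_gt: "bb > 1" using n2 by simp

lemma ceil_log_nonneg: assumes "t \<ge> 0" shows "\<lceil>log bb (1 + t)\<rceil> \<ge> 0"
proof -
  have "0 \<le> log bb (1 + t)" using bb_gt assms by (subst zero_le_log_cancel_iff) auto
  then show ?thesis by simp
qed

lemma ceil_log_mono: "0 \<le> s \<Longrightarrow> s \<le> t \<Longrightarrow> \<lceil>log bb (1 + s)\<rceil> \<le> \<lceil>log bb (1 + t)\<rceil>"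
  using bb_gt by (intro ceiling_mono) (auto simp: log_le_cancel_iff)

lemma ceil_log_zero: "t \<ge> 0 \<Longrightarrow> \<lceil>log bb (1 + t)\<rceil> \<le> 0 \<Longrightarrow> t = 0"
proof -
  assume t: "t \<ge> 0" "\<lceil>log bb (1 + t)\<rceil> \<le> 0"
  then have "log bb (1 + t) \<le> 0" by (meson ceiling_le_zero)
  then have "1 + t \<le> 1" using bb_gt t(1) log_le_zero_cancel_iff[of bb "1 + t"] by simp
  with t(1) show "t = 0" by simp
qed

lemma Wm_ge: "i < n \<Longrightarrow> w i \<le> Wm" unfolding Wm_def by auto

lemma Wm_pos: "Wm \<ge> 1"
proof -
  have "w 0 \<ge> 1" using wpos[of 0] n2 by auto
  then show ?thesis using Wm_ge[of 0] n2 by auto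
qed

lemma cost_le: "x \<subseteq> V \<Longrightarrow> real (cost w x) \<le> real n * real Wm"
proof -
  assume x: "x \<subseteq> V"
  have "cost w x \<le> (\<Sum>i\<in>x. Wm)" unfolding cost_def by (rule sum_mono) (use x Wm_ge in auto)
  also have "\<dots> = card x * Wm" by simp
  also have "\<dots> \<le> n * Wm" using card_mono[OF _ x] by simp
  finally show ?thesis by (metis of_nat_le_iff of_nat_mult)
qed

lemma cost_zero: assumes "x \<subseteq> V" "cost w x = 0" shows "x = {}"
proof -
  have "finite x" using assms(1) finite_subset by blast
  then have "\<forall>i\<in>x. w i = 0" using assms(2) unfolding cost_def by simp
  then show ?thesis using assms(1) wpos by fastforce
qed

lemma LP_le_nW: "LP n E w x \<le> real n * real Wm"
proof -
  have "LP n E w x \<le> obj x (\<lambda>_. 1)" by (rule LP_le[OF feas_one])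
  also have "\<dots> = (\<Sum>i\<in>V - x. real (w i))" unfolding obj_def by simp
  also have "\<dots> \<le> (\<Sum>i\<in>V - x. real Wm)" by (rule sum_mono) (use Wm_ge in auto)
  also have "\<dots> \<le> real n * real Wm" using card_mono[of V "V - x"] by (simp add: mult_right_mono)
  finally show ?thesis .
qed

lemma b1_range: "x \<subseteq> V \<Longrightarrow> 0 \<le> b1 x \<and> b1 x \<le> B"
  unfolding b1_def B_def using cost_le ceil_log_nonneg ceil_log_mono by auto

lemma b2_range: "0 \<le> b2 x \<and> b2 x \<le> B"
  unfolding b2_def B_def using LP_le_nW LP_nonneg ceil_log_nonneg ceil_log_mono by auto

lemma b1_zero: "x \<subseteq> V \<Longrightarrow> b1 x \<le> 0 \<Longrightarrow> x = {}"
  unfolding b1_def using ceil_log_zero[of "real (cost w x)"] cost_zero by auto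

lemma b1_mono: "cost w x \<le> cost w y \<Longrightarrow> b1 x \<le> b1 y"
  unfolding b1_def by (rule ceil_log_mono) auto

lemma b2_mono: "LP n E w x \<le> LP n E w y \<Longrightarrow> b2 x \<le> b2 y"
  unfolding b2_def by (rule ceil_log_mono) (auto simp: LP_nonneg)

lemma B_nonneg: "B \<ge> 0" unfolding B_def by (rule ceil_log_nonneg) simp

end

context DS2 begin

definition "good x \<longleftrightarrow> val x \<le> 2 * real (OPT n E w)"
definition "Inv P \<longleftrightarrow> finite P \<and> P \<noteq> {} \<and> (\<forall>x\<in>P. x \<subseteq> V) \<and>
   (\<forall>x\<in>P. \<forall>z\<in>P. x \<noteq> z \<longrightarrow> \<not> f_le n E w x z \<and> box n E w x \<noteq> box n E w z)"
definition "rel z' z \<longleftrightarrow> f_le n E w z' z \<or> (box n E w z' = box n E w z \<and> val z' \<le> val z)"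

lemma InvD: assumes "Inv P"
  shows "finite P" "P \<noteq> {}" "\<And>x. x \<in> P \<Longrightarrow> x \<subseteq> V"
    "\<And>x z. x \<in> P \<Longrightarrow> z \<in> P \<Longrightarrow> x \<noteq> z \<Longrightarrow> \<not> f_le n E w x z"
    "\<And>x z. x \<in> P \<Longrightarrow> z \<in> P \<Longrightarrow> x \<noteq> z \<Longrightarrow> box n E w x \<noteq> box n E w z"
  using assms unfolding Inv_def by simp_all

lemma InvI: assumes "finite P" "P \<noteq> {}" "\<And>x. x \<in> P \<Longrightarrow> x \<subseteq> V"
    "\<And>x z. x \<in> P \<Longrightarrow> z \<in> P \<Longrightarrow> x \<noteq> z \<Longrightarrow> \<not> f_le n E w x z \<and> box n E w x \<noteq> box n E w z"
  shows "Inv P"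
  using assms unfolding Inv_def by simp

lemma rel_props: assumes "rel z' z" shows "b1 z' \<le> b1 z" "b2 z' \<le> b2 z" "val z' \<le> val z"
  using assms unfolding rel_def f_le_def box_eq val_def by (auto intro: b1_mono b2_mono)

lemma discard_iff: "discard n E w P x' \<longleftrightarrow> (\<exists>y\<in>P. (f_le n E w y x' \<and> \<not> f_eq n E w y x') \<or>
      (box n E w y = box n E w x' \<and> val y \<le> val x'))"
  unfolding discard_def val_def by simp

lemma update_target: "\<exists>z\<in>update n E w P x'. rel z x'"
proof (cases "discard n E w P x'")
  case True
  then show ?thesis unfolding discard_iff update_def rel_def by auto
next
  case False
  then have "x' \<in> update n E w P x'" unfolding update_def by auto
  moreover have "rel x' x'" unfolding rel_def f_le_def by auto
  ultimately show ?thesis by blast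
qed

lemma update_mono: assumes "z \<in> P" shows "\<exists>z'\<in>update n E w P x'. rel z' z"
proof (cases "discard n E w P x'")
  case True
  then have "z \<in> update n E w P x'" using assms unfolding update_def by auto
  moreover have "rel z z" unfolding rel_def f_le_def by auto
  ultimately show ?thesis by blast
next
  case False
  show ?thesis
  proof (cases "z \<in> update n E w P x'")
    case True
    moreover have "rel z z" unfolding rel_def f_le_def by auto
    ultimately show ?thesis by blast
  next
    case nz: False
    have x'U: "x' \<in> update n E w P x'" using False unfolding update_def by auto
    from nz False assms have "z = x' \<or> f_le n E w x' z \<or> box n E w z = box n E w x'"
      unfolding update_def by auto
    moreover have "\<not> (box n E w z = box n E w x' \<and> val z \<le> val x')"
      using False assms unfolding discard_iff by auto
    ultimately have "rel x' z" unfolding rel_def f_le_def by auto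
    with x'U show ?thesis by blast
  qed
qed

lemma Inv_update: assumes I: "Inv P" and x': "x' \<subseteq> V" shows "Inv (update n E w P x')"
proof (cases "discard n E w P x'")
  case True then have "update n E w P x' = P" unfolding update_def by (simp only: if_True)
  then show ?thesis using I by (simp only:)
next
  case False
  let ?R = "{z\<in>P. z \<noteq> x' \<and> \<not> (f_le n E w x' z \<or> box n E w z = box n E w x')}"
  have U: "update n E w P x' = insert x' ?R" using False unfolding update_def by (simp only: if_False)
  have nd: "\<not> f_le n E w z x'" if "z \<in> ?R" for z
  proof
    assume fl: "f_le n E w z x'"
    show False
    proof (cases "f_eq n E w z x'")
      case True then have "f_le n E w x' z" unfolding f_eq_def f_le_def by auto
      then show False using that by blast
    next
      case False
      have "z \<in> P" using that by blast
      then have "discard n E w P x'" unfolding discard_def using fl False by blast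
      then show False using \<open>\<not> discard n E w P x'\<close> by blast
    qed
  qed
  have R: "?R \<subseteq> P" by auto
  have "finite P" using InvD(1)[OF I] .
  then have "finite ?R" using R by (rule finite_subset[rotated])
  then have fin: "finite (insert x' ?R)" by simp
  have sub: "x \<subseteq> V" if "x \<in> insert x' ?R" for x using that InvD(3)[OF I] x' by auto
  have pw: "\<not> f_le n E w a b \<and> box n E w a \<noteq> box n E w b"
    if a: "a \<in> insert x' ?R" and b: "b \<in> insert x' ?R" and ab: "a \<noteq> b" for a b
  proof (cases "a = x'")
    case True
    then have "b \<in> ?R" using b ab by auto
    then show ?thesis using True by auto
  next
    case False
    then have aR: "a \<in> ?R" using a by auto
    show ?thesis
    proof (cases "b = x'")
      case True then show ?thesis using aR nd[OF aR] by auto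
    next
      case False
      then have "b \<in> P" using b by auto
      moreover have "a \<in> P" using aR by auto
      ultimately show ?thesis using InvD(4,5)[OF I] ab by simp
    qed
  qed
  show ?thesis unfolding U by (rule InvI[OF fin _ sub pw]) simp
qed

lemma Inv_card: assumes I: "Inv P" shows "card P \<le> nat (2 * B + 1)"
proof -
  let ?g = "\<lambda>p. b1 p - b2 p"
  have inj: "inj_on ?g P"
  proof
    fix p q assume p: "p \<in> P" and q: "q \<in> P" and eq: "?g p = ?g q"
    show "p = q"
    proof (rule ccontr)
      assume ne: "p \<noteq> q"
      then have n1: "\<not> f_le n E w p q" "\<not> f_le n E w q p" "box n E w p \<noteq> box n E w q"
        using I p q unfolding Inv_def by auto
      then have "(cost w p < cost w q \<and> LP n E w q < LP n E w p) \<or> (cost w q < cost w p \<and> LP n E w p < LP n E w q)"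
        unfolding f_le_def by auto
      then show False
      proof
        assume a: "cost w p < cost w q \<and> LP n E w q < LP n E w p"
        then have "b1 p \<le> b1 q" "b2 q \<le> b2 p" using b1_mono b2_mono by auto
        then show False using eq n1(3) unfolding box_eq by auto
      next
        assume a: "cost w q < cost w p \<and> LP n E w p < LP n E w q"
        then have "b1 q \<le> b1 p" "b2 p \<le> b2 q" using b1_mono b2_mono by auto
        then show False using eq n1(3) unfolding box_eq by auto
      qed
    qed
  qed
  have "?g ` P \<subseteq> {-B..B}"
  proof
    fix t assume "t \<in> ?g ` P"
    then obtain p where p: "p \<in> P" "t = ?g p" by blast
    then have "p \<subseteq> V" using I unfolding Inv_def by blast
    then have "0 \<le> b1 p \<and> b1 p \<le> B" "0 \<le> b2 p \<and> b2 p \<le> B" using b1_range b2_range by auto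
    then show "t \<in> {-B..B}" using p(2) by auto
  qed
  then have "card (?g ` P) \<le> card {-B..B}" by (intro card_mono) auto
  then show ?thesis using card_image[OF inj] B_nonneg by simp
qed

lemma V_cover: "is_vertex_cover n E V"
proof -
  have "e \<inter> V \<noteq> {}" if eE: "e \<in> E" for e
  proof -
    obtain a b where "e = {a,b}" "a < n" using edge[OF eE] by metis
    then have "a \<in> e \<inter> V" by simp
    then show ?thesis by blast
  qed
  then show ?thesis unfolding is_vertex_cover_def by auto
qed

lemma OPT_attained: "\<exists>C. is_vertex_cover n E C \<and> cost w C = OPT n E w"
proof -
  have fin: "finite {x. is_vertex_cover n E x}" unfolding is_vertex_cover_def
    by (rule finite_subset[of _ "Pow V"]) auto
  have "OPT n E w \<in> cost w ` {x. is_vertex_cover n E x}" unfolding OPT_def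
  proof (rule Min_in)
    show "finite (cost w ` {x. is_vertex_cover n E x})" using fin by (rule finite_imageI)
    show "cost w ` {x. is_vertex_cover n E x} \<noteq> {}" using V_cover by blast
  qed
  then show ?thesis by auto
qed

lemma LP_empty_le: "LP n E w {} \<le> real (OPT n E w)"
proof -
  obtain C where C: "is_vertex_cover n E C" "cost w C = OPT n E w" using OPT_attained by blast
  have CV: "C \<subseteq> V" using C unfolding is_vertex_cover_def by auto
  let ?y = "\<lambda>i. if i \<in> C then (1::real) else 0"
  have "feas {} ?y"
  proof -
    have "1 \<le> (\<Sum>i\<in>e. ?y i)" if eE: "e \<in> E" for e
    proof -
      obtain a b where ab: "e = {a,b}" "a \<noteq> b" "a < n" "b < n" using edge[OF eE] by blast
      have "e \<inter> C \<noteq> {}" using C eE unfolding is_vertex_cover_def by auto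
      then show ?thesis using ab by auto
    qed
    then show ?thesis unfolding feas_def uncovered_def by auto
  qed
  then have "LP n E w {} \<le> obj {} ?y" by (rule LP_le)
  also have "obj {} ?y = (\<Sum>i\<in>V. if i \<in> C then real (w i) else 0)" unfolding obj_def
    by (rule sum.cong) auto
  also have "\<dots> = (\<Sum>i\<in>C. real (w i))" using CV by (simp add: sum.If_cases Int_absorb1)
  also have "\<dots> = real (OPT n E w)" using C(2) unfolding cost_def by (metis of_nat_sum)
  finally show ?thesis .
qed

lemma good_empty: "good {}"
  unfolding good_def val_def using LP_empty_le by (simp add: cost_def)

lemma goal_if: assumes "x \<in> P" "x \<subseteq> V" "good x" "LP n E w x = 0" shows "goal n E w P"
proof -
  have "uncovered E x = {}" using LP_ge1[of x] assms(4) by (cases "uncovered E x = {}") auto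
  then have "is_vertex_cover n E x" using assms(2) unfolding is_vertex_cover_def uncovered_def by auto
  moreover have "cost w x \<le> 2 * OPT n E w" using assms(3,4) unfolding good_def val_def by simp
  ultimately show ?thesis using assms(1) unfolding goal_def by blast
qed

end

context DS2 begin

definition "gpot P = (if {} \<in> P then nat (Min (b2 ` {x\<in>P. good x})) else nat (B + 1 + Min (b1 ` P)))"
definition "flip x i = {j. j < n \<and> ((j \<in> x) \<noteq> (j = i))}"

lemma flip_V: "flip x i \<subseteq> V" unfolding flip_def by auto

lemma b1_empty: "b1 {} = 0" unfolding b1_def cost_def by simp

lemma Min_le_int: "finite S \<Longrightarrow> z \<in> S \<Longrightarrow> Min (f ` S) \<le> (f z :: int)" by simp

lemma Min_ex_int: "finite S \<Longrightarrow> S \<noteq> {} \<Longrightarrow> \<exists>z\<in>S. Min (f ` S) = (f z :: int)"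
proof -
  assume "finite S" "S \<noteq> {}"
  then have "Min (f ` S) \<in> f ` S" by (intro Min_in) auto
  then show ?thesis by auto
qed

lemma empty_stays: assumes I: "Inv P" and x': "x' \<subseteq> V" and e: "{} \<in> P"
  shows "{} \<in> update n E w P x'"
proof -
  obtain z where z: "z \<in> update n E w P x'" "rel z {}" using update_mono[OF e] by blast
  have "z \<subseteq> V" using InvD(3)[OF Inv_update[OF I x'] z(1)] .
  moreover have "b1 z \<le> 0" using rel_props(1)[OF z(2)] b1_empty by simp
  ultimately have "z = {}" by (rule b1_zero)
  then show ?thesis using z by simp
qed

lemma good_fin: "Inv P \<Longrightarrow> finite {x\<in>P. good x}" using InvD(1) by auto

lemma gpot_phase2_le: assumes I: "Inv P" and e: "{} \<in> P" shows "gpot P \<le> nat B"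
proof -
  have "{} \<in> {x\<in>P. good x}" using e good_empty by simp
  then have "Min (b2 ` {x\<in>P. good x}) \<le> b2 {}" using good_fin[OF I] by (intro Min_le_int)
  then have "Min (b2 ` {x\<in>P. good x}) \<le> B" using b2_range[of "{}"] by linarith
  then show ?thesis unfolding gpot_def using e by (simp add: nat_mono)
qed

lemma gpot_phase1_ge: assumes I: "Inv P" and e: "{} \<notin> P" shows "gpot P \<ge> nat B + 1"
proof -
  obtain z where z: "z \<in> P" "Min (b1 ` P) = b1 z" using Min_ex_int[OF InvD(1,2)[OF I]] by blast
  have "b1 z \<ge> 0" using b1_range[OF InvD(3)[OF I z(1)]] by simp
  then show ?thesis unfolding gpot_def using e z B_nonneg by simp
qed

lemma gpot_le: assumes I: "Inv P" shows "gpot P \<le> nat (2 * B + 1)"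
proof (cases "{} \<in> P")
  case True then show ?thesis using gpot_phase2_le[OF I] B_nonneg by simp
next
  case False
  obtain z where z: "z \<in> P" "Min (b1 ` P) = b1 z" using Min_ex_int[OF InvD(1,2)[OF I]] by blast
  have "b1 z \<le> B" using b1_range[OF InvD(3)[OF I z(1)]] by simp
  then show ?thesis unfolding gpot_def using False z B_nonneg by simp
qed

lemma gpot_mono: assumes I: "Inv P" and x': "x' \<subseteq> V"
  shows "gpot (update n E w P x') \<le> gpot P"
proof -
  let ?U = "update n E w P x'"
  have IU: "Inv ?U" by (rule Inv_update[OF I x'])
  show ?thesis
  proof (cases "{} \<in> P")
    case True
    have eU: "{} \<in> ?U" by (rule empty_stays[OF I x' True])
    have "{} \<in> {x\<in>P. good x}" using True good_empty by simp
    then obtain z where z: "z \<in> {x\<in>P. good x}" "Min (b2 ` {x\<in>P. good x}) = b2 z"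
      using Min_ex_int[OF good_fin[OF I]] by blast
    obtain z' where z': "z' \<in> ?U" "rel z' z" using update_mono[of z P x'] z(1) by blast
    have "good z'" using rel_props(3)[OF z'(2)] z(1) unfolding good_def by simp
    then have "Min (b2 ` {x\<in>?U. good x}) \<le> b2 z'" using z'(1) good_fin[OF IU] by (intro Min_le_int) auto
    also have "\<dots> \<le> b2 z" by (rule rel_props(2)[OF z'(2)])
    finally show ?thesis unfolding gpot_def using True eU z(2) by simp
  next
    case False
    show ?thesis
    proof (cases "{} \<in> ?U")
      case True
      then show ?thesis using gpot_phase2_le[OF IU] gpot_phase1_ge[OF I False] by simp
    next
      case nU: False
      obtain z where z: "z \<in> P" "Min (b1 ` P) = b1 z" using Min_ex_int[OF InvD(1,2)[OF I]] by blast
      obtain z' where z': "z' \<in> ?U" "rel z' z" using update_mono[OF z(1)] by blast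
      have "Min (b1 ` ?U) \<le> b1 z'" using z'(1) InvD(1)[OF IU] by (intro Min_le_int)
      also have "\<dots> \<le> b1 z" by (rule rel_props(1)[OF z'(2)])
      finally show ?thesis unfolding gpot_def using False nU z(2) by simp
    qed
  qed
qed

lemma flip_ins: "z \<subseteq> V \<Longrightarrow> i < n \<Longrightarrow> i \<notin> z \<Longrightarrow> flip z i = insert i z"
  unfolding flip_def by auto

lemma flip_del: "z \<subseteq> V \<Longrightarrow> i \<in> z \<Longrightarrow> flip z i = z - {i}"
  unfolding flip_def by auto

lemma cost_ins: "z \<subseteq> V \<Longrightarrow> i \<notin> z \<Longrightarrow> cost w (insert i z) = cost w z + w i"
  unfolding cost_def by (simp add: finite_subset)

lemma cost_del: "z \<subseteq> V \<Longrightarrow> i \<in> z \<Longrightarrow> real (cost w (z - {i})) = real (cost w z) - real (w i)"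
  unfolding cost_def by (simp add: finite_subset sum_diff1_nat of_nat_diff member_le_sum)

lemma gpot_prog: assumes I: "Inv P" and ng: "\<not> goal n E w P"
  shows "\<exists>x\<in>P. \<exists>i<n. gpot (update n E w P (flip x i)) < gpot P"
proof (cases "{} \<in> P")
  case True
  have "{} \<in> {x\<in>P. good x}" using True good_empty by simp
  then obtain z where z: "z \<in> {x\<in>P. good x}" "Min (b2 ` {x\<in>P. good x}) = b2 z"
    using Min_ex_int[OF good_fin[OF I]] by blast
  have zP: "z \<in> P" and gz: "good z" using z by auto
  have zV: "z \<subseteq> V" using InvD(3)[OF I zP] .
  have "LP n E w z \<noteq> 0" using goal_if[OF zP zV gz] ng by blast
  then have "uncovered E z \<noteq> {}" using LP_empty_unc by blast
  then have L1: "LP n E w z \<ge> 1" by (rule LP_ge1)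
  obtain i where i: "i < n" "i \<notin> z" "real (w i) \<le> 2 * (LP n E w z - LP n E w (insert i z))"
     "LP n E w z \<le> real n * (LP n E w z - LP n E w (insert i z))"
    using LP_step[OF L1] by blast
  let ?x = "insert i z"
  have fl: "flip z i = ?x" by (rule flip_ins[OF zV i(1,2)])
  have "val ?x \<le> val z" unfolding val_def using cost_ins[OF zV i(2)] i(3) by simp
  then have gx: "good ?x" using gz unfolding good_def by simp
  have "b2 ?x \<le> b2 z - 1" unfolding b2_def
    by (rule ceil_log_drop) (use n2 L1 LP_nonneg i(4) in auto)
  let ?U = "update n E w P ?x"
  have xV: "?x \<subseteq> V" using zV i(1) by auto
  have IU: "Inv ?U" by (rule Inv_update[OF I xV])
  have eU: "{} \<in> ?U" by (rule empty_stays[OF I xV True])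
  obtain z' where z': "z' \<in> ?U" "rel z' ?x" using update_target by blast
  have "good z'" using rel_props(3)[OF z'(2)] gx unfolding good_def by simp
  then have "Min (b2 ` {x\<in>?U. good x}) \<le> b2 z'" using z'(1) good_fin[OF IU] by (intro Min_le_int) auto
  also have "\<dots> \<le> b2 ?x" by (rule rel_props(2)[OF z'(2)])
  also have "\<dots> \<le> b2 z - 1" by fact
  finally have m: "Min (b2 ` {x\<in>?U. good x}) \<le> b2 z - 1" .
  have "0 \<le> Min (b2 ` {x\<in>?U. good x})"
  proof -
    obtain q where "q \<in> {x\<in>?U. good x}" "Min (b2 ` {x\<in>?U. good x}) = b2 q"
      using Min_ex_int[OF good_fin[OF IU], of b2] eU good_empty by blast
    then show ?thesis using b2_range by simp
  qed
  then have "gpot ?U < gpot P" unfolding gpot_def using True eU z(2) m by simp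
  then show ?thesis using zP i(1) fl by metis
next
  case False
  obtain z where z: "z \<in> P" "Min (b1 ` P) = b1 z" using Min_ex_int[OF InvD(1,2)[OF I]] by blast
  have zV: "z \<subseteq> V" using InvD(3)[OF I z(1)] .
  have zne: "z \<noteq> {}" using False z(1) by auto
  have finz: "finite z" using zV finite_subset by blast
  have "Max (w ` z) \<in> w ` z" by (rule Max_in) (use finz zne in auto)
  then obtain i where i: "i \<in> z" "w i = Max (w ` z)" by (metis imageE)
  have in_: "i < n" using i zV by auto
  have "cost w z \<le> (\<Sum>j\<in>z. w i)" unfolding cost_def using i finz by (intro sum_mono) auto
  also have "\<dots> = card z * w i" by simp
  also have "\<dots> \<le> n * w i" using card_mono[OF _ zV] by simp
  finally have cz: "real (cost w z) \<le> real n * real (w i)" by (metis of_nat_le_iff of_nat_mult)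
  have c1: "cost w z \<ge> 1" using cost_zero[OF zV] zne by (cases "cost w z") auto
  let ?x = "z - {i}"
  have fl: "flip z i = ?x" by (rule flip_del[OF zV i(1)])
  have cx: "real (cost w ?x) = real (cost w z) - real (w i)" by (rule cost_del[OF zV i(1)])
  have "b1 ?x \<le> b1 z - 1" unfolding b1_def
    by (rule ceil_log_drop) (use n2 c1 cx cz in auto)
  let ?U = "update n E w P ?x"
  have xV: "?x \<subseteq> V" using zV by auto
  have IU: "Inv ?U" by (rule Inv_update[OF I xV])
  show ?thesis
  proof (cases "{} \<in> ?U")
    case True
    then have "gpot ?U < gpot P" using gpot_phase2_le[OF IU] gpot_phase1_ge[OF I False] by simp
    then show ?thesis using z(1) in_ fl by metis
  next
    case nU: False
    obtain z' where z': "z' \<in> ?U" "rel z' ?x" using update_target by blast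
    have "Min (b1 ` ?U) \<le> b1 z'" using z'(1) InvD(1)[OF IU] by (intro Min_le_int)
    also have "\<dots> \<le> b1 ?x" by (rule rel_props(1)[OF z'(2)])
    also have "\<dots> \<le> b1 z - 1" by fact
    finally have m: "Min (b1 ` ?U) \<le> b1 z - 1" .
    obtain q where q: "q \<in> ?U" "Min (b1 ` ?U) = b1 q" using Min_ex_int[OF InvD(1,2)[OF IU]] by blast
    have "0 \<le> b1 q" using b1_range[OF InvD(3)[OF IU q(1)]] by simp
    then have "gpot ?U < gpot P" unfolding gpot_def using False nU z(2) m q(2) B_nonneg by simp
    then show ?thesis using z(1) in_ fl by metis
  qed
qed

end


lemma pow_bound: assumes n: "(n::nat) \<ge> 2" shows "(1 - 1 / real n) ^ (n - 1) \<ge> exp (-2)"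
proof -
  let ?t = "1 / real n"
  have t0: "0 \<le> ?t" and t2: "?t \<le> 1/2" using n by (auto simp: field_simps)
  have "- ?t - 2 * ?t\<^sup>2 \<le> ln (1 - ?t)" by (rule ln_one_minus_pos_lower_bound[OF t0 t2])
  moreover have "2 * ?t\<^sup>2 \<le> ?t" using n by (simp add: power2_eq_square field_simps)
  ultimately have l: "- 2 * ?t \<le> ln (1 - ?t)" by linarith
  have pos: "0 < 1 - ?t" using t2 by linarith
  have "real (n - 1) * (- 2 * ?t) \<ge> -2"
  proof -
    have "real (n - 1) * (- 2 * ?t) = - 2 * (real (n - 1) / real n)" by simp
    moreover have "real (n - 1) / real n \<le> 1" using n by (simp add: field_simps)
    ultimately show ?thesis by linarith
  qed
  also have "real (n - 1) * (- 2 * ?t) \<le> real (n - 1) * ln (1 - ?t)" using l by (intro mult_left_mono) auto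
  finally have "exp (-2) \<le> exp (real (n - 1) * ln (1 - ?t))" by simp
  also have "\<dots> = (1 - ?t) ^ (n - 1)" using pos by (simp add: exp_of_nat_mult)
  finally show ?thesis .
qed

context DS2 begin

lemma pmf_mutate_flip: assumes i: "i < n"
  shows "pmf (mutate n x) (flip x i) \<ge> exp (-2) / real n"
proof -
  let ?M = "Pi_pmf {0..<n} False (\<lambda>_. bernoulli_pmf (1 / real n))"
  let ?g = "\<lambda>F. {i. i < n \<and> ((i \<in> x) \<noteq> F i)}"
  let ?F0 = "\<lambda>j. j = i"
  have p01: "0 \<le> 1 / real n" "1 / real n \<le> 1" using n2 by auto
  have "pmf (mutate n x) (flip x i) = measure ?M (?g -` {flip x i})"
    unfolding mutate_def by (rule pmf_map)
  also have "\<dots> \<ge> measure ?M {?F0}"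
  proof (rule measure_pmf.finite_measure_mono)
    show "{?F0} \<subseteq> ?g -` {flip x i}" unfolding flip_def by auto
  qed auto
  moreover have "measure ?M {?F0} = (\<Prod>j\<in>{0..<n}. pmf (bernoulli_pmf (1 / real n)) (j = i))"
    unfolding measure_pmf_single using i by (subst pmf_Pi') auto
  moreover have "\<dots> = pmf (bernoulli_pmf (1 / real n)) True * (\<Prod>j\<in>{0..<n} - {i}. pmf (bernoulli_pmf (1 / real n)) (j = i))"
    using i by (subst prod.remove[of _ i]) auto
  moreover have "(\<Prod>j\<in>{0..<n} - {i}. pmf (bernoulli_pmf (1 / real n)) (j = i)) = (1 - 1 / real n) ^ (n - 1)"
  proof -
    have "(\<Prod>j\<in>{0..<n} - {i}. pmf (bernoulli_pmf (1 / real n)) (j = i)) = (\<Prod>j\<in>{0..<n} - {i}. 1 - 1 / real n)"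
      using p01 by (intro prod.cong) auto
    also have "\<dots> = (1 - 1 / real n) ^ (n - 1)" using i by simp
    finally show ?thesis .
  qed
  moreover have "pmf (bernoulli_pmf (1 / real n)) True = 1 / real n" using p01 by simp
  ultimately have "pmf (mutate n x) (flip x i) \<ge> 1 / real n * (1 - 1 / real n) ^ (n - 1)" by simp
  moreover have "1 / real n * (1 - 1 / real n) ^ (n - 1) \<ge> 1 / real n * exp (-2)"
    using pow_bound[OF n2] by (intro mult_left_mono) auto
  ultimately show ?thesis by simp
qed

lemma demo_step_eq: "demo_step n E w P = bind_pmf (pmf_of_set P) (\<lambda>x. map_pmf (update n E w P) (mutate n x))"
  unfolding demo_step_def map_pmf_def by simp

lemma set_mutate: "set_pmf (mutate n x) \<subseteq> Pow V"
  unfolding mutate_def by auto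

lemma step_support: assumes I: "Inv P" and Q: "Q \<in> set_pmf (demo_step n E w P)"
  shows "\<exists>x'. x' \<subseteq> V \<and> Q = update n E w P x'"
proof -
  have fin: "finite P" "P \<noteq> {}" using InvD[OF I] by auto
  from Q fin obtain x x' where "x \<in> P" "x' \<in> set_pmf (mutate n x)" "Q = update n E w P x'"
    unfolding demo_step_eq by auto
  then show ?thesis using set_mutate by blast
qed

lemma init_Inv: assumes "P \<in> set_pmf (demo_init n)" shows "Inv P"
proof -
  have "set_pmf (pmf_of_set (Pow V)) = Pow V" by (rule set_pmf_of_set) auto
  then show ?thesis using assms unfolding demo_init_def by (auto simp: Inv_def)
qed

end

context DS2 begin

definition "KK = exp 2 * real n * real (nat (2 * B + 1))"

lemma KK_pos: "KK > 0" unfolding KK_def using n2 B_nonneg by simp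

lemma prob_prog: assumes I: "Inv P" and ng: "\<not> goal n E w P"
  shows "measure_pmf.prob (demo_step n E w P) {Q. gpot Q < gpot P} \<ge> exp (-2) / (real n * real (nat (2 * B + 1)))"
proof -
  obtain x i where x: "x \<in> P" "i < n" "gpot (update n E w P (flip x i)) < gpot P"
    using gpot_prog[OF I ng] by blast
  let ?Q0 = "update n E w P (flip x i)"
  let ?D = "demo_step n E w P"
  have fin: "finite P" "P \<noteq> {}" using InvD[OF I] by auto
  have cP: "card P \<ge> 1" "card P \<le> nat (2 * B + 1)" using fin Inv_card[OF I] by (auto simp: Suc_le_eq card_gt_0_iff)
  have "pmf (map_pmf (update n E w P) (mutate n x)) ?Q0 = measure (mutate n x) (update n E w P -` {?Q0})"
    by (rule pmf_map)
  also have "\<dots> \<ge> measure (mutate n x) {flip x i}"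
    by (rule measure_pmf.finite_measure_mono) auto
  moreover have "measure (mutate n x) {flip x i} \<ge> exp (-2) / real n"
    unfolding measure_pmf_single by (rule pmf_mutate_flip[OF x(2)])
  ultimately have pm: "pmf (map_pmf (update n E w P) (mutate n x)) ?Q0 \<ge> exp (-2) / real n" by linarith
  have "pmf ?D ?Q0 = (\<Sum>y\<in>P. pmf (map_pmf (update n E w P) (mutate n y)) ?Q0) / real (card P)"
    unfolding demo_step_eq by (rule pmf_bind_pmf_of_set[OF fin(2,1)])
  also have "\<dots> \<ge> pmf (map_pmf (update n E w P) (mutate n x)) ?Q0 / real (card P)"
    using x(1) fin(1) by (intro divide_right_mono member_le_sum) auto
  finally have "pmf ?D ?Q0 \<ge> (exp (-2) / real n) / real (card P)"
    using pm cP by (smt (verit) divide_right_mono of_nat_0_le_iff)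
  moreover have "(exp (-2) / real n) / real (card P) \<ge> (exp (-2) / real n) / real (nat (2 * B + 1))"
    using cP n2 by (intro divide_left_mono) auto
  moreover have "measure_pmf.prob ?D {Q. gpot Q < gpot P} \<ge> pmf ?D ?Q0"
    unfolding measure_pmf_single[symmetric] using x(3) by (intro measure_pmf.finite_measure_mono) auto
  ultimately show ?thesis by simp
qed

lemma step_ineq: assumes I: "Inv P"
  shows "(\<integral>\<^sup>+Q. ennreal (KK * real (gpot Q)) \<partial>stopped_step n E w P) + (if goal n E w P then 0 else 1)
     \<le> ennreal (KK * real (gpot P))"
proof (cases "goal n E w P")
  case True
  then show ?thesis unfolding stopped_step_def using KK_pos by simp
next
  case False
  let ?D = "demo_step n E w P"
  let ?S = "{Q. gpot Q < gpot P}"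
  let ?h = "\<lambda>Q. ennreal (KK * real (gpot Q))"
  have pw: "?h Q + ennreal KK * indicator ?S Q \<le> ?h P" if QD: "Q \<in> set_pmf ?D" for Q
  proof -
    obtain x' where x': "x' \<subseteq> V" "Q = update n E w P x'" using step_support[OF I QD] by blast
    have mono: "gpot Q \<le> gpot P" using gpot_mono[OF I x'(1)] x'(2) by simp
    show ?thesis
    proof (cases "Q \<in> ?S")
      case True
      then have "real (gpot Q) + 1 \<le> real (gpot P)" by simp
      then have "KK * (real (gpot Q) + 1) \<le> KK * real (gpot P)" using KK_pos
        by (intro mult_left_mono) auto
      then have "KK * real (gpot Q) + KK \<le> KK * real (gpot P)" by (simp add: distrib_left)
      then have le: "ennreal (KK * real (gpot Q) + KK) \<le> ?h P" by (rule ennreal_leI)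
      have "ennreal (KK * real (gpot Q) + KK) = ennreal (KK * real (gpot Q)) + ennreal KK"
        using KK_pos by (intro ennreal_plus) auto
      then show ?thesis using le True by simp
    next
      case nS: False
      have "KK * real (gpot Q) \<le> KK * real (gpot P)" using mono KK_pos by simp
      then show ?thesis using nS by (simp add: ennreal_leI)
    qed
  qed
  have "(\<integral>\<^sup>+Q. ?h Q \<partial>?D) + ennreal KK * emeasure ?D ?S = (\<integral>\<^sup>+Q. ?h Q + ennreal KK * indicator ?S Q \<partial>?D)"
    by (subst nn_integral_add) (auto simp: nn_integral_cmult_indicator)
  also have "\<dots> \<le> (\<integral>\<^sup>+Q. ?h P \<partial>?D)"
    by (rule nn_integral_mono_AE) (use pw in \<open>auto intro!: AE_pmfI\<close>)
  also have "\<dots> = ?h P" by (simp add: measure_pmf.emeasure_space_1)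
  finally have a: "(\<integral>\<^sup>+Q. ?h Q \<partial>?D) + ennreal KK * emeasure ?D ?S \<le> ?h P" .
  have "1 \<le> KK * measure_pmf.prob ?D ?S"
  proof -
    have "KK * measure_pmf.prob ?D ?S \<ge> KK * (exp (-2) / (real n * real (nat (2 * B + 1))))"
      using prob_prog[OF I False] KK_pos by (intro mult_left_mono) auto
    also have "KK * (exp (-2) / (real n * real (nat (2 * B + 1)))) = 1"
    proof -
      have m: "real n * real (nat (2 * B + 1)) > 0" using n2 B_nonneg by simp
      have "KK * (exp (-2) / (real n * real (nat (2 * B + 1))))
          = (exp 2 * exp (-2)) * ((real n * real (nat (2 * B + 1))) / (real n * real (nat (2 * B + 1))))"
        unfolding KK_def by (simp add: ac_simps)
      also have "\<dots> = 1"
      proof -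
        have "0 < n" "2 * real_of_int B + 1 \<noteq> 0" using n2 B_nonneg by auto
        then show ?thesis using m by (simp add: exp_minus_inverse)
      qed
      finally show ?thesis .
    qed
    finally show ?thesis by simp
  qed
  then have "1 \<le> ennreal KK * emeasure ?D ?S"
    using KK_pos by (simp add: measure_pmf.emeasure_eq_measure ennreal_mult[symmetric] ennreal_1[symmetric] ennreal_leI del: ennreal_1)
  then have "(\<integral>\<^sup>+Q. ?h Q \<partial>?D) + 1 \<le> (\<integral>\<^sup>+Q. ?h Q \<partial>?D) + ennreal KK * emeasure ?D ?S"
    by (rule add_left_mono)
  from order_trans[OF this a] have "(\<integral>\<^sup>+Q. ?h Q \<partial>?D) + 1 \<le> ?h P" .
  then show ?thesis unfolding stopped_step_def using False by simp
qed

end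


lemma ln_lower: assumes "(x::real) \<ge> 0" shows "ln (1 + x) \<ge> x / (1 + x)"
proof -
  have "ln (1 - x / (1 + x)) \<le> - (x / (1 + x))"
    using assms by (intro ln_one_minus_pos_upper_bound) (auto simp: field_simps)
  moreover have "1 - x / (1 + x) = inverse (1 + x)" using assms by (simp add: field_simps)
  moreover have "ln (inverse (1 + x)) = - ln (1 + x)" using assms by (simp add: ln_inverse)
  ultimately show ?thesis by simp
qed

context DS2 begin

lemma pop_Inv: "P \<in> set_pmf (demo_pop n E w t) \<Longrightarrow> Inv P"
proof (induction t arbitrary: P)
  case 0 then show ?case using init_Inv by simp
next
  case (Suc t)
  then obtain P0 where P0: "P0 \<in> set_pmf (demo_pop n E w t)" "P \<in> set_pmf (stopped_step n E w P0)" by auto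
  have I0: "Inv P0" using Suc.IH[OF P0(1)] .
  show ?case
  proof (cases "goal n E w P0")
    case True then show ?thesis using P0(2) I0 unfolding stopped_step_def by simp
  next
    case False
    then have "P \<in> set_pmf (demo_step n E w P0)" using P0(2) unfolding stopped_step_def by simp
    then obtain x' where "x' \<subseteq> V" "P = update n E w P0 x'" using step_support[OF I0] by blast
    then show ?thesis using Inv_update[OF I0] by simp
  qed
qed

abbreviation "hh \<equiv> \<lambda>P. ennreal (KK * real (gpot P))"

lemma partial_bound:
  "(\<Sum>t<k. ennreal (measure_pmf.prob (demo_pop n E w t) {P. \<not> goal n E w P}))
     + (\<integral>\<^sup>+P. hh P \<partial>demo_pop n E w k) \<le> (\<integral>\<^sup>+P. hh P \<partial>demo_pop n E w 0)"
proof (induction k)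
  case 0 then show ?case by simp
next
  case (Suc k)
  let ?p = "demo_pop n E w k"
  let ?NG = "{P. \<not> goal n E w P}"
  have e: "ennreal (measure_pmf.prob ?p ?NG) = (\<integral>\<^sup>+P. indicator ?NG P \<partial>?p)"
    by (simp add: measure_pmf.emeasure_eq_measure[symmetric])
  have "ennreal (measure_pmf.prob ?p ?NG) + (\<integral>\<^sup>+P. hh P \<partial>demo_pop n E w (Suc k))
      = (\<integral>\<^sup>+P. indicator ?NG P \<partial>?p) + (\<integral>\<^sup>+P. (\<integral>\<^sup>+Q. hh Q \<partial>stopped_step n E w P) \<partial>?p)"
    using e by simp
  also have "\<dots> = (\<integral>\<^sup>+P. (\<integral>\<^sup>+Q. hh Q \<partial>stopped_step n E w P) + (if goal n E w P then 0 else 1) \<partial>?p)"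
    by (subst nn_integral_add[symmetric]) (auto intro!: nn_integral_cong simp: indicator_def add.commute)
  also have "\<dots> \<le> (\<integral>\<^sup>+P. hh P \<partial>?p)"
  proof (rule nn_integral_mono_AE, rule AE_pmfI)
    fix P assume "P \<in> set_pmf ?p"
    then have "Inv P" by (rule pop_Inv)
    then show "(\<integral>\<^sup>+Q. hh Q \<partial>stopped_step n E w P) + (if goal n E w P then 0 else 1) \<le> hh P"
      by (rule step_ineq)
  qed
  finally have s: "ennreal (measure_pmf.prob ?p ?NG) + (\<integral>\<^sup>+P. hh P \<partial>demo_pop n E w (Suc k)) \<le> (\<integral>\<^sup>+P. hh P \<partial>?p)" .
  have "(\<Sum>t<Suc k. ennreal (measure_pmf.prob (demo_pop n E w t) ?NG)) + (\<integral>\<^sup>+P. hh P \<partial>demo_pop n E w (Suc k))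
      = (\<Sum>t<k. ennreal (measure_pmf.prob (demo_pop n E w t) ?NG)) + (ennreal (measure_pmf.prob ?p ?NG) + (\<integral>\<^sup>+P. hh P \<partial>demo_pop n E w (Suc k)))"
    by (simp add: add.assoc)
  also have "\<dots> \<le> (\<Sum>t<k. ennreal (measure_pmf.prob (demo_pop n E w t) ?NG)) + (\<integral>\<^sup>+P. hh P \<partial>?p)"
    using s by (rule add_left_mono)
  also have "\<dots> \<le> (\<integral>\<^sup>+P. hh P \<partial>demo_pop n E w 0)" by (rule Suc.IH)
  finally show ?case .
qed

lemma init_bound: "(\<integral>\<^sup>+P. hh P \<partial>demo_pop n E w 0) \<le> ennreal (KK * real (nat (2 * B + 1)))"
proof -
  have "(\<integral>\<^sup>+P. hh P \<partial>demo_pop n E w 0) \<le> (\<integral>\<^sup>+P. ennreal (KK * real (nat (2 * B + 1))) \<partial>demo_pop n E w 0)"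
  proof (rule nn_integral_mono_AE, rule AE_pmfI)
    fix P assume "P \<in> set_pmf (demo_pop n E w 0)"
    then have "Inv P" by (rule pop_Inv)
    then have "gpot P \<le> nat (2 * B + 1)" by (rule gpot_le)
    then show "hh P \<le> ennreal (KK * real (nat (2 * B + 1)))"
      using KK_pos by (intro ennreal_leI mult_left_mono) auto
  qed
  also have "\<dots> = ennreal (KK * real (nat (2 * B + 1)))" by (simp add: measure_pmf.emeasure_space_1)
  finally show ?thesis .
qed

lemma expected_time_bound: "expected_time n E w \<le> ennreal (KK * real (nat (2 * B + 1)))"
proof -
  have "expected_time n E w \<le> (\<integral>\<^sup>+P. hh P \<partial>demo_pop n E w 0)"
    unfolding expected_time_def
  proof (rule suminf_le_const[OF summableI])
    fix k
    show "(\<Sum>t<k. ennreal (measure_pmf.prob (demo_pop n E w t) {P. \<not> goal n E w P})) \<le> (\<integral>\<^sup>+P. hh P \<partial>demo_pop n E w 0)"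
      using partial_bound[of k] by (rule order_trans[rotated]) simp
  qed
  also have "\<dots> \<le> ennreal (KK * real (nat (2 * B + 1)))" by (rule init_bound)
  finally show ?thesis .
qed

end

lemma (in DS2) r_bound: "real (nat (2 * B + 1)) \<le> 15 * real n * (ln (real n) + ln (real Wm))"
proof -
  let ?L = "ln (real n) + ln (real Wm)"
  have l2: "ln 2 \<ge> (1::real) / 2" using ln_lower[of 1] by simp
  have lnn: "ln (real n) \<ge> ln 2" using n2 by simp
  have lnW: "ln (real Wm) \<ge> 0" using Wm_pos by simp
  have Lge: "?L \<ge> 1/2" using l2 lnn lnW by linarith
  have bbl: "ln bb \<ge> 1 / (3 * real n)"
  proof -
    have "ln bb \<ge> (1 / (2 * real n)) / (1 + 1 / (2 * real n))" by (rule ln_lower) simp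
    also have "(1 / (2 * real n)) / (1 + 1 / (2 * real n)) = 1 / (2 * real n + 1)" using n2 by (simp add: field_simps)
    also have "1 / (2 * real n + 1) \<ge> 1 / (3 * real n)" using n2 by (intro divide_left_mono) auto
    finally show ?thesis .
  qed
  have bbpos: "ln bb > 0" by (rule ln_gt_zero[OF bb_gt])
  have "real n * real Wm \<ge> 1 * 1" using n2 Wm_pos by (intro mult_mono) auto
  then have nW: "real n * real Wm \<ge> 1" by simp
  have "ln (1 + real n * real Wm) \<le> ln (2 * (real n * real Wm))" using nW by simp
  also have "\<dots> = ln 2 + ln (real n) + ln (real Wm)" using n2 Wm_pos by (simp add: ln_mult)
  also have "\<dots> \<le> 2 * ?L" using lnn lnW by (simp add: algebra_simps)
  finally have l1: "ln (1 + real n * real Wm) \<le> 2 * ?L" .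
  have l1p: "ln (1 + real n * real Wm) \<ge> 0" using nW by simp
  have "log bb (1 + real n * real Wm) = ln (1 + real n * real Wm) / ln bb" by (simp add: log_def)
  also have "\<dots> \<le> ln (1 + real n * real Wm) * (3 * real n)"
  proof -
    have p3: "0 < 1 / (3 * real n)" using n2 by simp
    have "1 / ln bb \<le> 1 / (1 / (3 * real n))"
      by (rule divide_left_mono[OF bbl]) (simp, rule mult_pos_pos[OF bbpos p3])
    then have "1 / ln bb \<le> 3 * real n" by simp
    then have "ln (1 + real n * real Wm) * (1 / ln bb) \<le> ln (1 + real n * real Wm) * (3 * real n)"
      by (rule mult_left_mono[OF _ l1p])
    then show ?thesis by simp
  qed
  also have "\<dots> \<le> 2 * ?L * (3 * real n)" using l1 n2 by (intro mult_right_mono) auto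
  also have "2 * ?L * (3 * real n) = 6 * real n * ?L" by (simp add: algebra_simps)
  finally have lg: "log bb (1 + real n * real Wm) \<le> 6 * real n * ?L" .
  have "real_of_int B \<le> log bb (1 + real n * real Wm) + 1" unfolding B_def by linarith
  then have Bb: "real_of_int B \<le> 6 * real n * ?L + 1" using lg by linarith
  have "real n * ?L \<ge> 2 * (1/2)" using n2 Lge by (intro mult_mono) auto
  then have "real n * ?L \<ge> 1" by simp
  then have "real (nat (2 * B + 1)) = 2 * real_of_int B + 1" using B_nonneg by simp
  also have "\<dots> \<le> 15 * real n * ?L" using Bb \<open>real n * ?L \<ge> 1\<close> by linarith
  finally show ?thesis .
qed

theorem theorem4:
  "\<exists>C N. \<forall>n E w. n \<ge> N \<longrightarrow> is_graph n E \<longrightarrow> (\<forall>i<n. w i > 0) \<longrightarrow>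
     expected_time n E w
       \<le> ennreal (C * real n ^ 3 * (ln (real n) + ln (real (Max (w ` {0..<n})))) ^ 2)"
proof (intro exI allI impI)
  fix n E and w :: "nat \<Rightarrow> nat"
  assume n: "2 \<le> n" and g: "is_graph n E" and wp: "\<forall>i<n. w i > 0"
  interpret DS2 n E w by unfold_locales (use n g wp in auto)
  let ?L = "ln (real n) + ln (real Wm)"
  have r: "real (nat (2 * B + 1)) \<le> 15 * real n * ?L" by (rule r_bound)
  have r0: "0 \<le> real (nat (2 * B + 1))" by simp
  have "KK * real (nat (2 * B + 1)) = exp 2 * real n * (real (nat (2 * B + 1)))\<^sup>2"
    unfolding KK_def by (simp add: power2_eq_square)
  also have "\<dots> \<le> exp 2 * real n * (15 * real n * ?L)\<^sup>2"
    using r r0 by (intro mult_left_mono power_mono) auto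
  also have "\<dots> = (225 * exp 2) * real n ^ 3 * ?L ^ 2" by (simp add: power2_eq_square power3_eq_cube algebra_simps)
  finally have "KK * real (nat (2 * B + 1)) \<le> (225 * exp 2) * real n ^ 3 * ?L ^ 2" .
  then have "expected_time n E w \<le> ennreal ((225 * exp 2) * real n ^ 3 * ?L ^ 2)"
    using expected_time_bound by (meson ennreal_leI order_trans)
  then show "expected_time n E w \<le> ennreal ((225 * exp 2) * real n ^ 3 * (ln (real n) + ln (real (Max (w ` {0..<n})))) ^ 2)"
    unfolding Wm_def .
qed


end
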